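(* Let $(a_n)_{n\ge0}$ be nonzero complex numbers with $|a_0|\ge|a_1|\ge\cdots$ and $\sum_n|a_n|^2<\infty$, and let $T$ be the weighted shift $Te_n=a_ne_{n+1}$. Let $H_1$ be the closed linear span of $\{e_n:n\ge1\}$. Then: (1) the map $\mathcal F:\mathcal A_T\to H_1$, $\mathcal F(S)=Se_0$, is a linear homeomorphism onto $H_1$, and $\mathcal J\mapsto\mathcal F(\mathcal J)$ is a lattice isomorphism from the lattice of closed ideals of $\mathcal A_T$ onto the lattice of closed $T$-invariant subspaces of $H_1$; (2) the map $\tilde{\mathcal F}:\tilde{\mathcal A}_T\to H$, $\tilde{\mathcal F}(S)=Se_0$, is a linear homeomorphism onto $H$, and $\mathcal J\mapsto\tilde{\mathcal F}(\mathcal J)$ is a lattice isomorphism from the lattice of closed ideals of $\tilde{\mathcal A}_T$ onto the lattice of closed $T$-invariant subspaces of $H$.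
   Context: $H$ is a complex Hilbert space with orthonormal basis $\{e_n\}_{n\ge0}$, $Te_n=a_ne_{n+1}$, $\mathcal A_T$ is the operator-norm closure in $\mathcal B(H)$ of the polynomials $p(T)$ with $p(0)=0$, and $\tilde{\mathcal A}_T=\mathcal A_T+\mathbb C I$ is its unitization inside $\mathcal B(H)$ (the norm closure of all polynomials in $T$). *)

theory Defs
  imports "HOL-Analysis.Analysis"
begin

text \<open>The Hilbert space H is modelled concretely as l2(N) of complex sequences,
  with orthonormal basis e_n = indicator of n.  Bounded operators are functions on
  sequences that vanish off l2 (so that equality of operators is equality of functions).\<close>

type_synonym vec = "nat \<Rightarrow> complex"
type_synonym op = "vec \<Rightarrow> vec"

definition l2 :: "vec set" where
  "l2 = {x. summable (\<lambda>n. (cmod (x n))\<^sup>2)}"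

definition l2norm :: "vec \<Rightarrow> real" where
  "l2norm x = sqrt (\<Sum>n. (cmod (x n))\<^sup>2)"

definition zvec :: vec where "zvec = (\<lambda>_. 0)"

definition vadd :: "vec \<Rightarrow> vec \<Rightarrow> vec" where "vadd x y = (\<lambda>n. x n + y n)"
definition vsub :: "vec \<Rightarrow> vec \<Rightarrow> vec" where "vsub x y = (\<lambda>n. x n - y n)"
definition vscale :: "complex \<Rightarrow> vec \<Rightarrow> vec" where "vscale c x = (\<lambda>n. c * x n)"

definition basis_vec :: "nat \<Rightarrow> vec" where
  "basis_vec m = (\<lambda>k. if k = m then 1 else 0)"

definition is_bop :: "op \<Rightarrow> bool" where
  "is_bop S \<longleftrightarrow>
     (\<forall>x. x \<notin> l2 \<longrightarrow> S x = zvec) \<and>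
     (\<forall>x\<in>l2. S x \<in> l2) \<and>
     (\<forall>x\<in>l2. \<forall>y\<in>l2. S (vadd x y) = vadd (S x) (S y)) \<and>
     (\<forall>c. \<forall>x\<in>l2. S (vscale c x) = vscale c (S x)) \<and>
     (\<exists>C. \<forall>x\<in>l2. l2norm (S x) \<le> C * l2norm x)"

definition opnorm :: "op \<Rightarrow> real" where
  "opnorm S = Sup ((\<lambda>x. l2norm (S x)) ` {x \<in> l2. l2norm x \<le> 1})"

definition zop :: op where "zop = (\<lambda>x. zvec)"
definition opadd :: "op \<Rightarrow> op \<Rightarrow> op" where "opadd S R = (\<lambda>x. vadd (S x) (R x))"
definition opsub :: "op \<Rightarrow> op \<Rightarrow> op" where "opsub S R = (\<lambda>x. vsub (S x) (R x))"
definition opscale :: "complex \<Rightarrow> op \<Rightarrow> op" where "opscale c S = (\<lambda>x. vscale c (S x))"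

definition wshift :: "(nat \<Rightarrow> complex) \<Rightarrow> op" where
  "wshift a = (\<lambda>x. if x \<in> l2 then (\<lambda>k. if k = 0 then 0 else a (k - 1) * x (k - 1)) else zvec)"

definition polyT :: "(nat \<Rightarrow> complex) \<Rightarrow> (nat \<Rightarrow> complex) \<Rightarrow> nat \<Rightarrow> op" where
  "polyT a c n = (\<lambda>x. if x \<in> l2 then (\<lambda>j. \<Sum>k\<le>n. c k * ((wshift a ^^ k) x) j) else zvec)"

definition A_T :: "(nat \<Rightarrow> complex) \<Rightarrow> op set" where
  "A_T a = {S. is_bop S \<and>
     (\<forall>\<epsilon>>0. \<exists>c n. c 0 = 0 \<and> opnorm (opsub S (polyT a c n)) < \<epsilon>)}"

definition A_T_tilde :: "(nat \<Rightarrow> complex) \<Rightarrow> op set" where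
  "A_T_tilde a = {S. is_bop S \<and>
     (\<forall>\<epsilon>>0. \<exists>c n. opnorm (opsub S (polyT a c n)) < \<epsilon>)}"

definition H1 :: "vec set" where
  "H1 = {x \<in> l2. \<forall>\<epsilon>>0. \<exists>n c. l2norm (vsub x (\<lambda>j. \<Sum>k\<in>{1..n}. c k * basis_vec k j)) < \<epsilon>}"

definition closed_ideals :: "op set \<Rightarrow> op set set" where
  "closed_ideals A = {J. J \<subseteq> A \<and> zop \<in> J \<and>
     (\<forall>S\<in>J. \<forall>R\<in>J. opadd S R \<in> J) \<and>
     (\<forall>c. \<forall>S\<in>J. opscale c S \<in> J) \<and>
     (\<forall>S\<in>J. \<forall>R\<in>A. R \<circ> S \<in> J \<and> S \<circ> R \<in> J) \<and>
     (\<forall>S\<in>A. (\<forall>\<epsilon>>0. \<exists>R\<in>J. opnorm (opsub S R) < \<epsilon>) \<longrightarrow> S \<in> J)}"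

definition closed_inv_subspaces :: "op \<Rightarrow> vec set \<Rightarrow> vec set set" where
  "closed_inv_subspaces T K = {M. M \<subseteq> K \<and> zvec \<in> M \<and>
     (\<forall>x\<in>M. \<forall>y\<in>M. vadd x y \<in> M) \<and>
     (\<forall>c. \<forall>x\<in>M. vscale c x \<in> M) \<and>
     (\<forall>x\<in>M. T x \<in> M) \<and>
     (\<forall>x\<in>l2. (\<forall>\<epsilon>>0. \<exists>y\<in>M. l2norm (vsub x y) < \<epsilon>) \<longrightarrow> x \<in> M)}"

definition linear_homeo :: "(op \<Rightarrow> vec) \<Rightarrow> op set \<Rightarrow> vec set \<Rightarrow> bool" where
  "linear_homeo F A K \<longleftrightarrow>
     (\<forall>S\<in>A. \<forall>R\<in>A. F (opadd S R) = vadd (F S) (F R)) \<and>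
     (\<forall>c. \<forall>S\<in>A. F (opscale c S) = vscale c (F S)) \<and>
     bij_betw F A K \<and>
     (\<forall>S\<in>A. \<forall>\<epsilon>>0. \<exists>\<delta>>0. \<forall>R\<in>A. opnorm (opsub R S) < \<delta> \<longrightarrow> l2norm (vsub (F R) (F S)) < \<epsilon>) \<and>
     (\<forall>S\<in>A. \<forall>\<epsilon>>0. \<exists>\<delta>>0. \<forall>R\<in>A. l2norm (vsub (F R) (F S)) < \<delta> \<longrightarrow> opnorm (opsub R S) < \<epsilon>)"

text \<open>Phi is a lattice (= order) isomorphism from the lattice L1 onto L2 (both ordered by inclusion)\<close>
definition lattice_iso :: "('a set \<Rightarrow> 'b set) \<Rightarrow> 'a set set \<Rightarrow> 'b set set \<Rightarrow> bool" where
  "lattice_iso Phi L1 L2 \<longleftrightarrow> bij_betw Phi L1 L2 \<and>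
     (\<forall>J1\<in>L1. \<forall>J2\<in>L1. J1 \<subseteq> J2 \<longleftrightarrow> Phi J1 \<subseteq> Phi J2)"

end

theory Submission
  imports Defs "HOL-Computational_Algebra.Formal_Power_Series"
begin

lemma l2_sq_summable: "x \<in> l2 \<Longrightarrow> summable (\<lambda>n. (cmod (x n))\<^sup>2)"
  by (simp add: l2_def)

lemma l2norm_nonneg: "x \<in> l2 \<Longrightarrow> 0 \<le> l2norm x"
  by (simp add: l2norm_def l2_def suminf_nonneg)

lemma l2norm_sq: "x \<in> l2 \<Longrightarrow> (l2norm x)\<^sup>2 = (\<Sum>n. (cmod (x n))\<^sup>2)"
proof -
  assume "x \<in> l2" then have "summable (\<lambda>n. (cmod (x n))\<^sup>2)" by (simp add: l2_def)
  then show ?thesis unfolding l2norm_def by (simp add: suminf_nonneg)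
qed

lemma l2_coord: assumes "x \<in> l2" shows "cmod (x m) \<le> l2norm x"
proof -
  have "(\<Sum>n\<in>{m}. (cmod (x n))\<^sup>2) \<le> (\<Sum>n. (cmod (x n))\<^sup>2)"
    by (rule sum_le_suminf) (use assms in \<open>auto simp: l2_def\<close>)
  then have "(cmod (x m))\<^sup>2 \<le> (\<Sum>n. (cmod (x n))\<^sup>2)" by simp
  then have "sqrt ((cmod (x m))\<^sup>2) \<le> l2norm x" unfolding l2norm_def
    using real_sqrt_le_mono by blast
  then show ?thesis by simp
qed

lemma l2norm_le_from_partial:
  assumes "x \<in> l2" "\<And>N. (\<Sum>n<N. (cmod (x n))\<^sup>2) \<le> B\<^sup>2" "0 \<le> B"
  shows "l2norm x \<le> B"
proof -
  have "(\<Sum>n. (cmod (x n))\<^sup>2) \<le> B\<^sup>2"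
    by (rule suminf_le_const) (use assms in \<open>auto simp: l2_def\<close>)
  then have "l2norm x \<le> sqrt (B\<^sup>2)" unfolding l2norm_def using real_sqrt_le_mono by blast
  then show ?thesis using assms by simp
qed

lemma partial_le_l2norm: assumes "x \<in> l2" shows "L2_set (\<lambda>n. cmod (x n)) {..<N} \<le> l2norm x"
proof -
  have "(\<Sum>n<N. (cmod (x n))\<^sup>2) \<le> (\<Sum>n. (cmod (x n))\<^sup>2)"
    by (rule sum_le_suminf) (use assms in \<open>auto simp: l2_def\<close>)
  then show ?thesis unfolding L2_set_def l2norm_def using real_sqrt_le_mono by blast
qed

lemma l2_vadd: assumes "x \<in> l2" "y \<in> l2" shows "vadd x y \<in> l2"
proof -
  have "summable (\<lambda>n. 2 * (cmod (x n))\<^sup>2 + 2 * (cmod (y n))\<^sup>2)"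
    using assms by (intro summable_add summable_mult) (auto simp: l2_def)
  moreover have "norm ((cmod (x n + y n))\<^sup>2) \<le> 2 * (cmod (x n))\<^sup>2 + 2 * (cmod (y n))\<^sup>2" for n
  proof -
    have "cmod (x n + y n) \<le> cmod (x n) + cmod (y n)" by (rule norm_triangle_ineq)
    then have "(cmod (x n + y n))\<^sup>2 \<le> (cmod (x n) + cmod (y n))\<^sup>2"
      by (simp add: power_mono)
    also have "\<dots> \<le> 2 * (cmod (x n))\<^sup>2 + 2 * (cmod (y n))\<^sup>2"
      by (smt (verit, best) sum_squares_bound zero_le_power2 power2_sum)
    finally show ?thesis by simp
  qed
  ultimately show ?thesis unfolding l2_def vadd_def
    by (auto intro: summable_comparison_test[where g="\<lambda>n. 2 * (cmod (x n))\<^sup>2 + 2 * (cmod (y n))\<^sup>2"])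
qed

lemma l2norm_vadd: assumes "x \<in> l2" "y \<in> l2" shows "l2norm (vadd x y) \<le> l2norm x + l2norm y"
proof (rule l2norm_le_from_partial[OF l2_vadd[OF assms]])
  fix N
  have "L2_set (\<lambda>n. cmod (vadd x y n)) {..<N} \<le> L2_set (\<lambda>n. cmod (x n) + cmod (y n)) {..<N}"
    by (rule L2_set_mono) (auto simp: vadd_def norm_triangle_ineq)
  also have "\<dots> \<le> L2_set (\<lambda>n. cmod (x n)) {..<N} + L2_set (\<lambda>n. cmod (y n)) {..<N}"
    by (rule L2_set_triangle_ineq)
  also have "\<dots> \<le> l2norm x + l2norm y" using partial_le_l2norm[OF assms(1)] partial_le_l2norm[OF assms(2)] by (rule add_mono)
  finally have h: "L2_set (\<lambda>n. cmod (vadd x y n)) {..<N} \<le> l2norm x + l2norm y" .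
  have "(\<Sum>n<N. (cmod (vadd x y n))\<^sup>2) = (L2_set (\<lambda>n. cmod (vadd x y n)) {..<N})\<^sup>2"
    unfolding L2_set_def by (simp add: sum_nonneg)
  also have "\<dots> \<le> (l2norm x + l2norm y)\<^sup>2" using h by (simp add: power_mono)
  finally show "(\<Sum>n<N. (cmod (vadd x y n))\<^sup>2) \<le> (l2norm x + l2norm y)\<^sup>2" .
qed (simp add: l2norm_nonneg add_nonneg_nonneg assms)

lemma l2_vscale: assumes "x \<in> l2" shows "vscale c x \<in> l2"
  using assms unfolding l2_def vscale_def by (simp add: norm_mult power_mult_distrib summable_mult)

lemma l2norm_vscale: assumes "x \<in> l2" shows "l2norm (vscale c x) = cmod c * l2norm x"
proof -
  have "(\<Sum>n. (cmod (vscale c x n))\<^sup>2) = (cmod c)\<^sup>2 * (\<Sum>n. (cmod (x n))\<^sup>2)"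
    unfolding vscale_def using assms by (simp add: norm_mult power_mult_distrib suminf_mult l2_def)
  then show ?thesis unfolding l2norm_def by (simp add: real_sqrt_mult)
qed

lemma vsub_eq: "vsub x y = vadd x (vscale (-1) y)"
  by (simp add: vsub_def vadd_def vscale_def)

lemma l2_vsub: "x \<in> l2 \<Longrightarrow> y \<in> l2 \<Longrightarrow> vsub x y \<in> l2"
  by (simp add: vsub_eq l2_vadd l2_vscale)

lemma l2norm_vsub: assumes "x \<in> l2" "y \<in> l2" shows "l2norm (vsub x y) \<le> l2norm x + l2norm y"
  using l2norm_vadd[OF assms(1) l2_vscale[OF assms(2)], of "-1"] l2norm_vscale[OF assms(2), of "-1"]
  by (simp add: vsub_eq)

lemma l2norm_vsub_tri: assumes "x \<in> l2" "y \<in> l2" "z \<in> l2"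
  shows "l2norm (vsub x z) \<le> l2norm (vsub x y) + l2norm (vsub y z)"
proof -
  have "vsub x z = vadd (vsub x y) (vsub y z)" by (auto simp: vsub_def vadd_def)
  then show ?thesis using l2norm_vadd[OF l2_vsub[OF assms(1,2)] l2_vsub[OF assms(2,3)]] by simp
qed

lemma l2norm_vsub_sym: "l2norm (vsub x y) = l2norm (vsub y x)"
  unfolding l2norm_def vsub_def by (simp add: norm_minus_commute)

lemma zvec_l2[simp]: "zvec \<in> l2" by (simp add: l2_def zvec_def)
lemma l2norm_zvec[simp]: "l2norm zvec = 0" by (simp add: l2norm_def zvec_def)

lemma l2norm_zero: assumes "x \<in> l2" "l2norm x = 0" shows "x = zvec"
proof
  fix m show "x m = zvec m" using l2_coord[OF assms(1), of m] assms(2) by (simp add: zvec_def)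
qed

lemma finite_support_l2: assumes "\<And>n. n > N \<Longrightarrow> x n = 0" shows "x \<in> l2"
proof -
  have "summable (\<lambda>n. (cmod (x n))\<^sup>2)"
    by (rule summable_finite[of "{..N}"]) (use assms in \<open>auto simp: not_le\<close>)
  then show ?thesis by (simp add: l2_def)
qed

lemma basis_l2[simp]: "basis_vec m \<in> l2"
  by (rule finite_support_l2[of m]) (simp add: basis_vec_def)

lemma l2norm_basis[simp]: "l2norm (basis_vec m) = 1"
proof -
  have "(\<Sum>n. (cmod (basis_vec m n))\<^sup>2) = (\<Sum>n\<in>{m}. (cmod (basis_vec m n))\<^sup>2)"
    by (rule suminf_finite) (auto simp: basis_vec_def)
  then show ?thesis by (simp add: l2norm_def basis_vec_def)
qed

definition trunc :: "vec \<Rightarrow> nat \<Rightarrow> vec" where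
  "trunc x N = (\<lambda>n. if n \<le> N then x n else 0)"

lemma trunc_l2: "trunc x N \<in> l2"
  by (rule finite_support_l2[of N]) (simp add: trunc_def)

lemma tail_small: assumes "x \<in> l2" "e > 0"
  shows "\<exists>N. \<forall>n\<ge>N. l2norm (vsub x (trunc x n)) < e"
proof -
  let ?f = "\<lambda>n. (cmod (x n))\<^sup>2"
  have sf: "summable ?f" using assms by (simp add: l2_def)
  obtain N where N: "\<forall>n\<ge>N. norm (\<Sum>i. ?f (i + n)) < e\<^sup>2"
    using suminf_exist_split[OF _ sf, of "e\<^sup>2"] assms by auto
  have "l2norm (vsub x (trunc x n)) < e" if "n \<ge> N" for n
  proof -
    have eq: "(\<lambda>i. (cmod (vsub x (trunc x n) i))\<^sup>2) = (\<lambda>i. if i \<le> n then 0 else ?f i)"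
      by (auto simp: vsub_def trunc_def)
    have s1: "summable (\<lambda>i. ?f (i + Suc n))" using summable_iff_shift[of ?f "Suc n"] sf by blast
    have "(\<Sum>i. (if i \<le> n then 0 else ?f i)) = (\<Sum>i. (if i + Suc n \<le> n then 0 else ?f (i + Suc n))) + (\<Sum>i<Suc n. (if i \<le> n then 0 else ?f i))"
      by (rule suminf_split_initial_segment) (use summable_iff_shift[of "\<lambda>i. if i \<le> n then 0 else ?f i" "Suc n"] s1 in simp)
    also have "\<dots> = (\<Sum>i. ?f (i + Suc n))" by simp
    finally have "(\<Sum>i. (cmod (vsub x (trunc x n) i))\<^sup>2) = (\<Sum>i. ?f (i + Suc n))" using eq by simp
    moreover have "norm (\<Sum>i. ?f (i + Suc n)) < e\<^sup>2" using N[rule_format, of "Suc n"] that by simp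
    ultimately have "(\<Sum>i. (cmod (vsub x (trunc x n) i))\<^sup>2) < e\<^sup>2" by simp
    then have "l2norm (vsub x (trunc x n)) < sqrt (e\<^sup>2)" unfolding l2norm_def using real_sqrt_less_mono by blast
    then show ?thesis using assms by simp
  qed
  then show ?thesis by blast
qed


definition bw :: "(nat \<Rightarrow> complex) \<Rightarrow> nat \<Rightarrow> complex" where
  "bw a n = (\<Prod>j<n. a j)"

lemma bw_0[simp]: "bw a 0 = 1" by (simp add: bw_def)
lemma bw_Suc: "bw a (Suc n) = a n * bw a n" by (simp add: bw_def)
lemma bw_nz: "(\<And>n. a n \<noteq> 0) \<Longrightarrow> bw a n \<noteq> 0" by (simp add: bw_def)

definition rho :: "(nat \<Rightarrow> complex) \<Rightarrow> nat \<Rightarrow> nat \<Rightarrow> real" where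
  "rho a m i = cmod (bw a m / (bw a i * bw a (m - i)))"

definition Kc :: "(nat \<Rightarrow> complex) \<Rightarrow> real" where
  "Kc a = 2 + 2 * (\<Sum>n. (cmod (a n))\<^sup>2) / (cmod (a 0))\<^sup>2"

locale ws =
  fixes a :: "nat \<Rightarrow> complex"
  assumes nz: "\<And>n. a n \<noteq> 0"
    and decr: "\<And>n. cmod (a (Suc n)) \<le> cmod (a n)"
    and sq: "summable (\<lambda>n. (cmod (a n))\<^sup>2)"
begin

lemma wdec: assumes "i \<le> j"
  shows "cmod (a j) \<le> cmod (a i)"
  using lift_Suc_antimono_le[of "\<lambda>n. cmod (a n)"] assms decr by blast

lemma Bmul:
  assumes "1 \<le> k"
  shows "cmod (bw a (n+k)) * cmod (a 0) \<le> cmod (bw a n) * cmod (bw a k) * cmod (a n)"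
  using assms(1)
proof (induction k rule: dec_induct)
  case base
  then show ?case by (simp add: bw_Suc norm_mult)
next
  case (step k)
  have le: "cmod (a (n+k)) \<le> cmod (a k)" using wdec by simp
  have "cmod (bw a (n + Suc k)) * cmod (a 0) = cmod (a (n+k)) * (cmod (bw a (n+k)) * cmod (a 0))"
    by (simp add: bw_Suc norm_mult)
  also have "\<dots> \<le> cmod (a (n+k)) * (cmod (bw a n) * cmod (bw a k) * cmod (a n))"
    using step.IH by (simp add: mult_left_mono)
  also have "\<dots> \<le> cmod (a k) * (cmod (bw a n) * cmod (bw a k) * cmod (a n))"
    using le by (simp add: mult_right_mono)
  also have "\<dots> = cmod (bw a n) * cmod (bw a (Suc k)) * cmod (a n)"
    by (simp add: bw_Suc norm_mult)
  finally show ?case .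
qed


lemma rho_le1:
  assumes "i \<le> m" "i < m"
  shows "rho a m i \<le> cmod (a i) / cmod (a 0)"
proof -
  have "cmod (bw a (i + (m-i))) * cmod (a 0) \<le> cmod (bw a i) * cmod (bw a (m-i)) * cmod (a i)"
    using Bmul[of "m-i" i] assms by simp
  then have h: "cmod (bw a m) * cmod (a 0) \<le> cmod (bw a i) * cmod (bw a (m-i)) * cmod (a i)"
    using assms by simp
  have p: "cmod (bw a i) * cmod (bw a (m-i)) > 0" "cmod (a 0) > 0" using nz bw_nz[of a, OF nz] by auto
  show ?thesis unfolding rho_def norm_divide norm_mult using h p
    by (simp add: divide_simps mult.commute mult.left_commute)
qed

lemma rho_sym: "i \<le> m \<Longrightarrow> rho a m (m - i) = rho a m i"
  by (simp add: rho_def mult.commute)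

lemma rho_end: "rho a m 0 = 1" "rho a m m = 1"
  using bw_nz[of a, OF nz] by (auto simp: rho_def)

lemma rho_mid:
  assumes "0 < i" "i < m"
  shows "rho a m i \<le> cmod (a (m div 2)) / cmod (a 0)"
proof (cases "m div 2 \<le> i")
  case True
  have "rho a m i \<le> cmod (a i) / cmod (a 0)" using rho_le1 assms by simp
  also have "\<dots> \<le> cmod (a (m div 2)) / cmod (a 0)"
    using wdec[OF True] by (simp add: divide_right_mono)
  finally show ?thesis .
next
  case False
  have "rho a m i = rho a m (m - i)" using rho_sym[of i m] assms by simp
  also have "\<dots> \<le> cmod (a (m-i)) / cmod (a 0)" using rho_le1[of "m-i" m] assms by simp
  also have "\<dots> \<le> cmod (a (m div 2)) / cmod (a 0)"
    using wdec[of "m div 2" "m - i"] False by (simp add: divide_right_mono)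
  finally show ?thesis .
qed


lemma pw_bound:
    shows "real p * (cmod (a p))\<^sup>2 \<le> (\<Sum>n. (cmod (a n))\<^sup>2)"
proof -
  have "real p * (cmod (a p))\<^sup>2 = (\<Sum>j<p. (cmod (a p))\<^sup>2)" by simp
  also have "\<dots> \<le> (\<Sum>j<p. (cmod (a j))\<^sup>2)"
    by (rule sum_mono) (use wdec in \<open>auto intro: power_mono\<close>)
  also have "\<dots> \<le> (\<Sum>n. (cmod (a n))\<^sup>2)" by (rule sum_le_suminf) (use sq in auto)
  finally show ?thesis .
qed

lemma rho_sum:
    shows "(\<Sum>i\<le>m. (rho a m i)\<^sup>2) \<le> Kc a"
proof -
  define q where "q = (cmod (a (m div 2)) / cmod (a 0))\<^sup>2"
  define h where "h = (\<lambda>i. (if i = 0 then 1 else 0) + (if i = m then 1 else 0) + (if i \<in> {0<..<m} then q else (0::real)))"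
  have q0: "q \<ge> 0" by (simp add: q_def)
  have le: "(rho a m i)\<^sup>2 \<le> h i" if im: "i \<le> m" for i
  proof -
    consider "i = 0" | "i = m" | "0 < i \<and> i < m" using im by (metis le_neq_implies_less not_gr_zero)
    then show ?thesis
    proof cases
      case 1 then show ?thesis using rho_end q0 by (simp add: h_def)
    next
      case 2 then show ?thesis using rho_end q0 by (simp add: h_def)
    next
      case 3
      have "rho a m i \<le> cmod (a (m div 2)) / cmod (a 0)" using rho_mid 3 by simp
      then have "(rho a m i)\<^sup>2 \<le> q" unfolding q_def by (intro power_mono) (auto simp: rho_def)
      then show ?thesis using 3 by (simp add: h_def)
    qed
  qed
  have "(\<Sum>i\<le>m. (rho a m i)\<^sup>2) \<le> (\<Sum>i\<le>m. h i)" by (rule sum_mono) (use le in auto)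
  also have "(\<Sum>i\<le>m. h i) = 1 + 1 + q * real (m - 1)"
  proof -
    have "(\<Sum>i\<le>m. h i) = (\<Sum>i\<le>m. (if i = 0 then 1 else 0)) + (\<Sum>i\<le>m. (if i = m then 1 else 0)) + (\<Sum>i\<le>m. (if i \<in> {0<..<m} then q else (0::real)))"
      by (simp add: h_def sum.distrib)
    also have "(\<Sum>i\<le>m. (if i \<in> {0<..<m} then q else (0::real))) = q * real (card ({..m} \<inter> {0<..<m}))"
      by (subst sum.If_cases) (auto simp: Int_def greaterThanLessThan_def greaterThan_def lessThan_def)
    also have "{..m} \<inter> {0<..<m} = {0<..<m}" by auto
    finally show ?thesis by simp
  qed
  also have "\<dots> \<le> Kc a"
  proof -
    have a0: "cmod (a 0) > 0" using nz by simp
    have "real (m - 1) \<le> 2 * real (m div 2)" by linarith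
    then have "q * real (m - 1) \<le> q * (2 * real (m div 2))" using q0 by (rule mult_left_mono)
    also have "\<dots> = 2 * (real (m div 2) * (cmod (a (m div 2)))\<^sup>2) / (cmod (a 0))\<^sup>2"
      by (simp add: q_def power_divide)
    also have "\<dots> \<le> 2 * (\<Sum>n. (cmod (a n))\<^sup>2) / (cmod (a 0))\<^sup>2"
      using pw_bound[ of "m div 2"] a0 by (simp add: divide_right_mono)
    finally show ?thesis unfolding Kc_def by simp
  qed
  finally show ?thesis .
qed

lemma Kc_pos: "Kc a \<ge> 0"
  unfolding Kc_def using suminf_nonneg[OF sq] by simp

end


definition conv :: "(nat \<Rightarrow> complex) \<Rightarrow> vec \<Rightarrow> vec \<Rightarrow> vec" where
  "conv a x y = (\<lambda>m. bw a m * (\<Sum>i\<le>m. (x i / bw a i) * (y (m - i) / bw a (m - i))))"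

context ws begin

lemma conv_alt: "conv a x y m = (\<Sum>i\<le>m. (bw a m / (bw a i * bw a (m - i))) * (x i * y (m - i)))"
  unfolding conv_def sum_distrib_left by (intro sum.cong refl) (simp add: divide_inverse mult_ac)

lemma conv_pt:
  "(cmod (conv a x y m))\<^sup>2 \<le> Kc a * (\<Sum>i\<le>m. (cmod (x i))\<^sup>2 * (cmod (y (m - i)))\<^sup>2)"
proof -
  have "cmod (conv a x y m) \<le> (\<Sum>i\<le>m. rho a m i * (cmod (x i) * cmod (y (m - i))))"
    unfolding conv_alt rho_def
    by (rule order_trans[OF norm_sum], rule sum_mono, simp only: norm_mult)
  then have "(cmod (conv a x y m))\<^sup>2 \<le> (\<Sum>i\<le>m. rho a m i * (cmod (x i) * cmod (y (m - i))))\<^sup>2"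
    by (simp add: power_mono)
  also have "\<dots> \<le> (\<Sum>i\<le>m. (rho a m i)\<^sup>2) * (\<Sum>i\<le>m. (cmod (x i) * cmod (y (m - i)))\<^sup>2)"
    by (rule Cauchy_Schwarz_ineq_sum)
  also have "\<dots> \<le> Kc a * (\<Sum>i\<le>m. (cmod (x i) * cmod (y (m - i)))\<^sup>2)"
    by (rule mult_right_mono[OF rho_sum]) (simp add: sum_nonneg)
  finally show ?thesis by (simp add: power_mult_distrib)
qed

lemma conv_bound:
  assumes "x \<in> l2" "y \<in> l2"
  shows "conv a x y \<in> l2" "l2norm (conv a x y) \<le> sqrt (Kc a) * l2norm x * l2norm y"
proof -
  let ?c = "\<lambda>m. (\<Sum>i\<le>m. (cmod (x i))\<^sup>2 * (cmod (y (m - i)))\<^sup>2)"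
  have sx: "summable (\<lambda>k. norm ((cmod (x k))\<^sup>2))" using assms by (simp add: l2_def)
  have sy: "summable (\<lambda>k. norm ((cmod (y k))\<^sup>2))" using assms by (simp add: l2_def)
  have cs: "?c sums ((\<Sum>k. (cmod (x k))\<^sup>2) * (\<Sum>k. (cmod (y k))\<^sup>2))"
    by (rule Cauchy_product_sums[OF sx sy])
  have sc: "summable (\<lambda>m. Kc a * ?c m)" using cs by (intro summable_mult) (auto simp: sums_iff)
  have s: "summable (\<lambda>m. (cmod (conv a x y m))\<^sup>2)"
    by (rule summable_comparison_test[OF _ sc]) (use conv_pt in simp)
  then show c: "conv a x y \<in> l2" by (simp add: l2_def)
  have "(\<Sum>m. (cmod (conv a x y m))\<^sup>2) \<le> (\<Sum>m. Kc a * ?c m)"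
    by (rule suminf_le[OF conv_pt s sc])
  also have "\<dots> = Kc a * ((l2norm x)\<^sup>2 * (l2norm y)\<^sup>2)"
  proof -
    have "suminf ?c = (l2norm x)\<^sup>2 * (l2norm y)\<^sup>2"
      using cs l2norm_sq[OF assms(1)] l2norm_sq[OF assms(2)] by (simp add: sums_iff)
    moreover have "summable ?c" using cs by (simp add: sums_iff)
    ultimately show ?thesis by (simp add: suminf_mult)
  qed
  finally have suml: "(\<Sum>m. (cmod (conv a x y m))\<^sup>2) \<le> Kc a * ((l2norm x)\<^sup>2 * (l2norm y)\<^sup>2)" .
  have "(l2norm (conv a x y))\<^sup>2 \<le> (sqrt (Kc a) * l2norm x * l2norm y)\<^sup>2"
  proof -
    have "(sqrt (Kc a) * l2norm x * l2norm y)\<^sup>2 = Kc a * ((l2norm x)\<^sup>2 * (l2norm y)\<^sup>2)"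
      using Kc_pos by (simp add: power_mult_distrib)
    then show ?thesis using l2norm_sq[OF c] suml by simp
  qed
  then show "l2norm (conv a x y) \<le> sqrt (Kc a) * l2norm x * l2norm y"
    by (rule power2_le_imp_le) (use Kc_pos l2norm_nonneg[OF assms(1)] l2norm_nonneg[OF assms(2)] in simp)
qed

end

definition Uf :: "(nat \<Rightarrow> complex) \<Rightarrow> vec \<Rightarrow> complex fps" where
  "Uf a x = Abs_fps (\<lambda>i. x i / bw a i)"

definition Sop :: "(nat \<Rightarrow> complex) \<Rightarrow> vec \<Rightarrow> op" where
  "Sop a x = (\<lambda>y. if y \<in> l2 then conv a x y else zvec)"

context ws begin

lemma conv_fps: "conv a x y = (\<lambda>m. bw a m * fps_nth (Uf a x * Uf a y) m)"
  unfolding conv_def Uf_def fps_mult_nth by (simp add: atLeast0AtMost)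

lemma Uf_conv: "Uf a (conv a x y) = Uf a x * Uf a y"
proof (intro fps_ext)
  fix n show "fps_nth (Uf a (conv a x y)) n = fps_nth (Uf a x * Uf a y) n"
    using bw_nz[of a, OF nz] by (simp only: Uf_def[of a "conv a x y"] fps_nth_Abs_fps) (simp add: conv_fps)
qed

lemma Uf_inj: "Uf a x = Uf a y \<Longrightarrow> x = y"
proof
  fix m assume "Uf a x = Uf a y"
  then have "x m / bw a m = y m / bw a m" unfolding Uf_def by (metis fps_nth_Abs_fps)
  then show "x m = y m" using bw_nz[of a, OF nz] by (simp add: divide_cancel_right)
qed

lemma conv_comm: "conv a x y = conv a y x"
  unfolding conv_fps by (simp add: mult.commute)

lemma conv_assoc: "conv a x (conv a y z) = conv a (conv a x y) z"
  unfolding conv_fps[of x "conv a y z"] conv_fps[of "conv a x y" z] Uf_conv by (simp add: mult.assoc)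

lemma Uf_vadd: "Uf a (vadd x y) = Uf a x + Uf a y"
  unfolding Uf_def vadd_def by (intro fps_ext) (simp add: add_divide_distrib)
lemma Uf_vscale: "Uf a (vscale c x) = fps_const c * Uf a x"
  unfolding Uf_def vscale_def by (intro fps_ext) simp
lemma Uf_vsub: "Uf a (vsub x y) = Uf a x - Uf a y"
  unfolding Uf_def vsub_def by (intro fps_ext) (simp add: diff_divide_distrib)
lemma Uf_zvec: "Uf a zvec = 0"
  unfolding Uf_def zvec_def by (intro fps_ext) simp
lemma Uf_e0: "Uf a (basis_vec 0) = 1"
  unfolding Uf_def basis_vec_def by (intro fps_ext) simp

lemma conv_vadd1: "conv a (vadd x x') y = vadd (conv a x y) (conv a x' y)"
  by (simp only: conv_fps Uf_vadd) (simp add: vadd_def distrib_right distrib_left)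
lemma conv_vadd2: "conv a y (vadd x x') = vadd (conv a y x) (conv a y x')"
  by (simp only: conv_fps Uf_vadd) (simp add: vadd_def distrib_right distrib_left)
lemma conv_vsub1: "conv a (vsub x x') y = vsub (conv a x y) (conv a x' y)"
  by (simp only: conv_fps Uf_vsub) (simp add: vsub_def left_diff_distrib right_diff_distrib)
lemma conv_vscale1: "conv a (vscale c x) y = vscale c (conv a x y)"
  by (simp only: conv_fps Uf_vscale mult.assoc) (simp add: vscale_def mult.left_commute)
lemma conv_vscale2: "conv a y (vscale c x) = vscale c (conv a y x)"
  using conv_vscale1 conv_comm by metis
lemma conv_zvec1: "conv a zvec y = zvec"
  unfolding conv_fps Uf_zvec by (simp add: zvec_def)
lemma conv_zvec2: "conv a y zvec = zvec"
  unfolding conv_fps Uf_zvec by (simp add: zvec_def)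
lemma conv_e0: "conv a x (basis_vec 0) = x"
  unfolding conv_fps Uf_e0 using bw_nz[of a, OF nz] by (simp add: Uf_def)

end

lemma vscale_zero_left: "vscale 0 v = zvec" by (simp add: vscale_def zvec_def)

lemma bop_zvec: assumes "is_bop S" shows "S zvec = zvec"
proof -
  have "S (vscale 0 zvec) = vscale 0 (S zvec)" using assms by (simp add: is_bop_def)
  then show ?thesis by (simp add: vscale_zero_left)
qed

lemma opnorm_le:
  assumes "\<And>x. x \<in> l2 \<Longrightarrow> l2norm x \<le> 1 \<Longrightarrow> l2norm (S x) \<le> C"
  shows "opnorm S \<le> C"
  unfolding opnorm_def
proof (rule cSup_least)
  have "zvec \<in> {x \<in> l2. l2norm x \<le> 1}" by simp
  then show "(\<lambda>x. l2norm (S x)) ` {x \<in> l2. l2norm x \<le> 1} \<noteq> {}" by blast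
qed (use assms in auto)

lemma bop_le: assumes "is_bop S" "x \<in> l2" shows "l2norm (S x) \<le> opnorm S * l2norm x"
proof -
  from assms(1) obtain C where C: "\<And>x. x \<in> l2 \<Longrightarrow> l2norm (S x) \<le> C * l2norm x"
    unfolding is_bop_def by blast
  have bdd: "bdd_above ((\<lambda>x. l2norm (S x)) ` {x \<in> l2. l2norm x \<le> 1})"
  proof (rule bdd_aboveI2)
    fix x assume "x \<in> {x \<in> l2. l2norm x \<le> 1}"
    then have "x \<in> l2" "l2norm x \<le> 1" "0 \<le> l2norm x" using l2norm_nonneg by auto
    then have "C * l2norm x \<le> max C 0"
      by (cases "C \<ge> 0") (auto intro: mult_left_le order_trans[of _ 0] simp: mult_nonpos_nonneg)
    then show "l2norm (S x) \<le> max C 0" using C[OF \<open>x \<in> l2\<close>] by linarith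
  qed
  show ?thesis
  proof (cases "l2norm x = 0")
    case True
    then have "x = zvec" using l2norm_zero assms by blast
    then show ?thesis using bop_zvec[OF assms(1)] by simp
  next
    case False
    define t where "t = l2norm x"
    have t: "t > 0" using False l2norm_nonneg[OF assms(2)] by (simp add: t_def)
    define x' where "x' = vscale (of_real (1/t)) x"
    have x'l2: "x' \<in> l2" using assms by (simp add: x'_def l2_vscale)
    have nx': "l2norm x' = 1" using t assms(2) by (simp add: x'_def l2norm_vscale t_def norm_divide)
    have Sx': "S x' = vscale (of_real (1/t)) (S x)" using assms by (simp add: x'_def is_bop_def)
    have Sxl2: "S x \<in> l2" using assms by (simp add: is_bop_def)
    have "l2norm (S x') \<le> opnorm S" unfolding opnorm_def
      by (rule cSup_upper[OF _ bdd]) (use x'l2 nx' in auto)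
    then have "(1/t) * l2norm (S x) \<le> opnorm S" using Sx' l2norm_vscale[OF Sxl2] t by (simp add: norm_divide)
    then show ?thesis using t by (simp add: t_def field_simps mult.commute)
  qed
qed

lemma opnorm_nonneg: assumes "is_bop S" shows "0 \<le> opnorm S"
  using bop_le[OF assms basis_l2, of 0] l2norm_nonneg[of "S (basis_vec 0)"] assms
  by (simp add: is_bop_def)

lemma opsub_bop: assumes "is_bop S" "is_bop R" shows "is_bop (opsub S R)"
proof -
  obtain C1 where C1: "\<And>x. x \<in> l2 \<Longrightarrow> l2norm (S x) \<le> C1 * l2norm x" using assms(1) unfolding is_bop_def by blast
  obtain C2 where C2: "\<And>x. x \<in> l2 \<Longrightarrow> l2norm (R x) \<le> C2 * l2norm x" using assms(2) unfolding is_bop_def by blast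
  have l: "S x \<in> l2" "R x \<in> l2" if "x \<in> l2" for x using assms that by (auto simp: is_bop_def)
  have "l2norm (opsub S R x) \<le> (C1 + C2) * l2norm x" if "x \<in> l2" for x
    using l2norm_vsub[OF l[OF that]] C1[OF that] C2[OF that] by (simp add: opsub_def distrib_right)
  moreover have "opsub S R x = zvec" if "x \<notin> l2" for x
    using assms that by (simp add: is_bop_def opsub_def vsub_def zvec_def)
  moreover have "opsub S R (vadd x y) = vadd (opsub S R x) (opsub S R y)" if "x \<in> l2" "y \<in> l2" for x y
    using assms that by (simp add: is_bop_def opsub_def vsub_def vadd_def fun_eq_iff)
  moreover have "opsub S R (vscale c x) = vscale c (opsub S R x)" if "x \<in> l2" for x c
    using assms that by (simp add: is_bop_def opsub_def vsub_def vscale_def algebra_simps)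
  ultimately show ?thesis using l by (auto simp: is_bop_def opsub_def l2_vsub)
qed

context ws begin

lemma Sop_e0: "Sop a x (basis_vec 0) = x"
  by (simp add: Sop_def conv_e0)

lemma Sop_bop: assumes "x \<in> l2" shows "is_bop (Sop a x)"
  unfolding is_bop_def
proof (intro conjI allI ballI impI)
  show "\<exists>C. \<forall>y\<in>l2. l2norm (Sop a x y) \<le> C * l2norm y"
    using conv_bound(2)[OF assms] by (auto simp: Sop_def intro!: exI[of _ "sqrt (Kc a) * l2norm x"])
qed (auto simp: Sop_def conv_bound(1)[OF assms] conv_vadd2 conv_vscale2 l2_vadd l2_vscale)

lemma Sop_opnorm: assumes "x \<in> l2" shows "opnorm (Sop a x) \<le> sqrt (Kc a) * l2norm x"
proof (rule opnorm_le)
  fix y assume y: "y \<in> l2" "l2norm y \<le> 1"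
  have "l2norm (Sop a x y) \<le> sqrt (Kc a) * l2norm x * l2norm y"
    using conv_bound(2)[OF assms y(1)] y by (simp add: Sop_def)
  also have "\<dots> \<le> sqrt (Kc a) * l2norm x * 1"
    using y Kc_pos l2norm_nonneg[OF assms] by (intro mult_left_mono) auto
  finally show "l2norm (Sop a x y) \<le> sqrt (Kc a) * l2norm x" by simp
qed

lemma Sop_norm_ge: assumes "x \<in> l2" shows "l2norm x \<le> opnorm (Sop a x)"
  using bop_le[OF Sop_bop[OF assms], of "basis_vec 0"] by (simp add: Sop_e0)

lemma zz: "vadd zvec zvec = zvec" "vsub zvec zvec = zvec" "vscale c zvec = zvec"
  by (auto simp: vadd_def vsub_def vscale_def zvec_def)
lemma Sop_add: "opadd (Sop a x) (Sop a y) = Sop a (vadd x y)"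
  unfolding Sop_def opadd_def by (rule ext) (simp add: conv_vadd1 zz)
lemma Sop_sub: "opsub (Sop a x) (Sop a y) = Sop a (vsub x y)"
  unfolding Sop_def opsub_def by (rule ext) (simp add: conv_vsub1 zz)
lemma Sop_scale: "opscale c (Sop a x) = Sop a (vscale c x)"
  unfolding Sop_def opscale_def by (rule ext) (simp add: conv_vscale1 zz)
lemma Sop_zvec: "Sop a zvec = zop"
  by (auto simp: Sop_def zop_def conv_zvec1)

lemma Sop_comp: assumes "x \<in> l2" "y \<in> l2" shows "Sop a x \<circ> Sop a y = Sop a (conv a x y)"
proof
  fix z show "(Sop a x \<circ> Sop a y) z = Sop a (conv a x y) z"
    using conv_bound(1)[OF assms(2)] by (auto simp: Sop_def conv_assoc conv_zvec2)
qed

lemma Sop_inj: "Sop a x = Sop a y \<Longrightarrow> x = y"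
  by (metis Sop_e0)

end

definition single :: "nat \<Rightarrow> complex \<Rightarrow> vec" where
  "single k v = (\<lambda>i. if i = k then v else 0)"

definition Ev :: "(nat \<Rightarrow> complex) \<Rightarrow> nat \<Rightarrow> vec" where
  "Ev a k = single k (bw a k)"

lemma single_l2: "single k v \<in> l2"
  by (rule finite_support_l2[of k]) (simp add: single_def)

context ws begin

lemma conv_single: "conv a (single k v) y =
   (\<lambda>m. if k \<le> m then v / bw a k * (bw a m / bw a (m-k)) * y (m-k) else 0)"
proof
  fix m
  have "conv a (single k v) y m = bw a m * (\<Sum>i\<le>m. (if i = k then v / bw a k * (y (m - i) / bw a (m - i)) else 0))"
    unfolding conv_def single_def by (intro arg_cong2[where f="(*)"] refl sum.cong) auto
  also have "\<dots> = (if k \<le> m then v / bw a k * (bw a m / bw a (m-k)) * y (m-k) else 0)"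
    by (simp add: sum.delta)
  finally show "conv a (single k v) y m = \<dots>" .
qed

lemma wshift_conv: "y \<in> l2 \<Longrightarrow> wshift a y = conv a (Ev a (Suc 0)) y"
proof -
  assume y: "y \<in> l2"
  show ?thesis
  proof
    fix m show "wshift a y m = conv a (Ev a (Suc 0)) y m"
    proof (cases m)
      case 0 then show ?thesis using y by (simp add: wshift_def Ev_def conv_single)
    next
      case (Suc n) then show ?thesis using y bw_nz[of a, OF nz] nz[of 0]
        by (simp add: wshift_def Ev_def conv_single bw_Suc)
    qed
  qed
qed

lemma wshift_Sop: "wshift a = Sop a (Ev a (Suc 0))"
proof (rule ext)
  fix y show "wshift a y = Sop a (Ev a (Suc 0)) y"
    by (cases "y \<in> l2") (simp add: Sop_def wshift_conv, simp add: Sop_def wshift_def)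
qed

lemma Ev_0: "Ev a 0 = basis_vec 0"
  by (simp add: Ev_def single_def basis_vec_def)

lemma Ev_Suc: "conv a (Ev a (Suc 0)) (Ev a k) = Ev a (Suc k)"
proof
  fix m show "conv a (Ev a (Suc 0)) (Ev a k) m = Ev a (Suc k) m"
  proof (cases m)
    case 0 then show ?thesis by (simp only: Ev_def conv_single) (simp add: single_def)
  next
    case (Suc n) then show ?thesis using bw_nz[of a, OF nz]
      by (simp only: Ev_def conv_single) (simp add: single_def bw_Suc nz)
  qed
qed

lemma Ev_l2: "Ev a k \<in> l2" by (simp add: Ev_def single_l2)

lemma wshift_pow: "y \<in> l2 \<Longrightarrow> (wshift a ^^ k) y = conv a (Ev a k) y"
proof (induction k)
  case 0 then show ?case by (simp add: Ev_0 conv_comm[of "basis_vec 0"] conv_e0)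
next
  case (Suc k)
  have l: "conv a (Ev a k) y \<in> l2" using conv_bound(1)[OF Ev_l2 Suc.prems] .
  have "(wshift a ^^ Suc k) y = wshift a (conv a (Ev a k) y)" using Suc by simp
  also have "\<dots> = conv a (Ev a (Suc 0)) (conv a (Ev a k) y)" using wshift_conv[OF l] .
  also have "\<dots> = conv a (Ev a (Suc k)) y" by (simp add: conv_assoc Ev_Suc)
  finally show ?case .
qed

lemma conv_sum1: "finite A \<Longrightarrow> conv a (\<lambda>i. \<Sum>k\<in>A. f k i) y m = (\<Sum>k\<in>A. conv a (f k) y m)"
proof (induction A rule: finite_induct)
  case empty
  have "(\<lambda>i. \<Sum>k\<in>{}. f k i) = zvec" by (simp add: zvec_def)
  then show ?case by (simp add: conv_def zvec_def)
next
  case (insert x F)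
  have "(\<lambda>i. \<Sum>k\<in>insert x F. f k i) = vadd (f x) (\<lambda>i. \<Sum>k\<in>F. f k i)"
    using insert by (simp add: vadd_def)
  then have "conv a (\<lambda>i. \<Sum>k\<in>insert x F. f k i) y m = conv a (f x) y m + conv a (\<lambda>i. \<Sum>k\<in>F. f k i) y m"
    by (simp only: conv_vadd1) (simp add: vadd_def)
  then show ?case using insert by simp
qed

lemma polyT_Sop: "polyT a c N = Sop a (trunc (\<lambda>k. c k * bw a k) N)"
proof
  fix y show "polyT a c N y = Sop a (trunc (\<lambda>k. c k * bw a k) N) y"
  proof (cases "y \<in> l2")
    case False then show ?thesis by (simp add: polyT_def Sop_def)
  next
    case True
    have tr: "trunc (\<lambda>k. c k * bw a k) N = (\<lambda>i. \<Sum>k\<le>N. vscale (c k) (Ev a k) i)"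
      by (rule ext) (simp add: trunc_def vscale_def Ev_def single_def if_distrib[of "(*) _"] sum.delta cong: if_cong)
    show ?thesis
    proof
      fix j
      have "polyT a c N y j = (\<Sum>k\<le>N. c k * conv a (Ev a k) y j)"
        using True by (simp add: polyT_def wshift_pow)
      also have "\<dots> = (\<Sum>k\<le>N. conv a (vscale (c k) (Ev a k)) y j)"
        by (simp only: conv_vscale1) (simp add: vscale_def)
      also have "\<dots> = conv a (\<lambda>i. \<Sum>k\<le>N. vscale (c k) (Ev a k) i) y j"
        by (rule conv_sum1[symmetric]) simp
      finally show "polyT a c N y j = Sop a (trunc (\<lambda>k. c k * bw a k) N) y j"
        using True tr by (simp add: Sop_def)
    qed
  qed
qed

end

lemma small_zero: assumes "\<And>e. e > 0 \<Longrightarrow> cmod d \<le> e" shows "d = 0"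
proof (rule ccontr)
  assume "d \<noteq> 0" then have "cmod d > 0" by simp
  then show False using assms[of "cmod d / 2"] by simp
qed

lemma H1_char: "H1 = {x \<in> l2. x 0 = 0}"
proof (intro set_eqI iffI)
  fix x assume x: "x \<in> H1"
  then have xl: "x \<in> l2" by (simp add: H1_def)
  have "cmod (x 0) \<le> e" if e: "e > 0" for e
  proof -
    obtain n c where nc: "l2norm (vsub x (\<lambda>j. \<Sum>k\<in>{1..n}. c k * basis_vec k j)) < e"
      using x e by (auto simp: H1_def)
    define v where "v = (\<lambda>j. \<Sum>k\<in>{1..n}. c k * basis_vec k j)"
    have vl: "v \<in> l2" by (rule finite_support_l2[of n]) (auto simp: v_def basis_vec_def intro!: sum.neutral)
    have v0: "v 0 = 0" by (auto simp: v_def basis_vec_def intro!: sum.neutral)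
    have "cmod (vsub x v 0) \<le> l2norm (vsub x v)" by (rule l2_coord[OF l2_vsub[OF xl vl]])
    moreover have "l2norm (vsub x v) < e" using nc by (simp only: v_def)
    moreover have "vsub x v 0 = x 0" using v0 by (simp add: vsub_def)
    ultimately show ?thesis by simp
  qed
  then have "x 0 = 0" by (rule small_zero)
  then show "x \<in> {x \<in> l2. x 0 = 0}" using xl by simp
next
  fix x assume x: "x \<in> {x \<in> l2. x 0 = 0}"
  have "\<exists>n c. l2norm (vsub x (\<lambda>j. \<Sum>k\<in>{1..n}. c k * basis_vec k j)) < e" if e0: "e > 0" for e
  proof -
    obtain N where N: "\<forall>n\<ge>N. l2norm (vsub x (trunc x n)) < e" using tail_small[of x e] x e0 by auto
    have "(\<lambda>j. \<Sum>k\<in>{1..N}. x k * basis_vec k j) = trunc x N"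
    proof
      fix j
      have "(\<Sum>k\<in>{1..N}. x k * basis_vec k j) = (\<Sum>k\<in>{1..N}. if k = j then x j else 0)"
        by (intro sum.cong) (auto simp: basis_vec_def)
      also have "\<dots> = trunc x N j" using x by (cases "j = 0") (auto simp: trunc_def sum.delta')
      finally show "(\<Sum>k\<in>{1..N}. x k * basis_vec k j) = trunc x N j" .
    qed
    then show ?thesis using N by (intro exI[of _ N] exI[of _ x]) simp
  qed
  then show "x \<in> H1" using x by (simp add: H1_def)
qed

context ws begin

lemma trunc_eq: "trunc (\<lambda>k. x k / bw a k * bw a k) N = trunc x N"
  using bw_nz[of a, OF nz] by (simp add: trunc_def)

lemma Sop_approx:
  assumes x: "x \<in> l2" and e: "e > 0"
  shows "\<exists>N. opnorm (opsub (Sop a x) (polyT a (\<lambda>k. x k / bw a k) N)) < e"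
proof -
  define e' where "e' = e / (sqrt (Kc a) + 1)"
  have hp: "sqrt (Kc a) + 1 > 0" using Kc_pos by (simp add: add_nonneg_pos)
  then have e': "e' > 0" using e by (simp add: e'_def)
  obtain N where N: "l2norm (vsub x (trunc x N)) < e'" using tail_small[OF x e'] by auto
  have "opnorm (opsub (Sop a x) (polyT a (\<lambda>k. x k / bw a k) N)) = opnorm (Sop a (vsub x (trunc x N)))"
    by (simp only: polyT_Sop trunc_eq Sop_sub)
  also have "\<dots> \<le> sqrt (Kc a) * l2norm (vsub x (trunc x N))"
    by (rule Sop_opnorm[OF l2_vsub[OF x trunc_l2]])
  also have "\<dots> \<le> sqrt (Kc a) * e'" using N Kc_pos by (intro mult_left_mono) auto
  also have "\<dots> < e"
  proof -
    have "sqrt (Kc a) * e' < (sqrt (Kc a) + 1) * e'" using e' by simp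
    also have "\<dots> = e" using hp by (simp add: e'_def)
    finally show ?thesis .
  qed
  finally show ?thesis by blast
qed

lemma Sop_in_At: assumes "x \<in> l2" shows "Sop a x \<in> A_T_tilde a"
proof -
  have "\<exists>c n. opnorm (opsub (Sop a x) (polyT a c n)) < e" if e0: "e > 0" for e
  proof -
    obtain N where "opnorm (opsub (Sop a x) (polyT a (\<lambda>k. x k / bw a k) N)) < e" using Sop_approx[OF assms(1) e0] by blast
    then show ?thesis by (intro exI)
  qed
  then show ?thesis using Sop_bop[OF assms(1)] by (simp add: A_T_tilde_def)
qed

lemma Sop_in_A: assumes "x \<in> l2" "x 0 = 0" shows "Sop a x \<in> A_T a"
proof -
  have "\<exists>c n. c 0 = 0 \<and> opnorm (opsub (Sop a x) (polyT a c n)) < e" if e0: "e > 0" for e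
  proof -
    obtain N where "opnorm (opsub (Sop a x) (polyT a (\<lambda>k. x k / bw a k) N)) < e" using Sop_approx[OF assms(1) e0] by blast
    then show ?thesis using assms(2) by (intro exI[of _ "\<lambda>k. x k / bw a k"] exI[of _ N]) simp
  qed
  then show ?thesis using Sop_bop[OF assms(1)] by (simp add: A_T_def)
qed

lemma At_approx:
  assumes S: "S \<in> A_T_tilde a" and e: "e > 0"
  shows "\<exists>c n. opnorm (opsub S (Sop a (trunc (\<lambda>k. c k * bw a k) n))) < e \<and>
            (S \<in> A_T a \<longrightarrow> c 0 = 0)"
proof (cases "S \<in> A_T a")
  case True
  then obtain c n where "c 0 = 0" "opnorm (opsub S (polyT a c n)) < e" using e by (auto simp: A_T_def)
  then show ?thesis by (intro exI[of _ c] exI[of _ n]) (simp add: polyT_Sop)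
next
  case False
  obtain c n where "opnorm (opsub S (polyT a c n)) < e" using S e by (auto simp: A_T_tilde_def)
  then show ?thesis using False by (intro exI[of _ c] exI[of _ n]) (simp add: polyT_Sop)
qed

lemma At_char:
  assumes S: "S \<in> A_T_tilde a"
  shows "S = Sop a (S (basis_vec 0)) \<and> (S \<in> A_T a \<longrightarrow> S (basis_vec 0) 0 = 0)"
proof -
  define x where "x = S (basis_vec 0)"
  have Sb: "is_bop S" using S by (simp add: A_T_tilde_def)
  have xl: "x \<in> l2" using Sb by (simp add: is_bop_def x_def)
  have main: "\<exists>p. p \<in> l2 \<and> l2norm (vsub x p) < e \<and> (\<forall>y\<in>l2. l2norm (opsub S (Sop a p) y) \<le> e * l2norm y)
      \<and> (S \<in> A_T a \<longrightarrow> p 0 = 0)" if e: "e > 0" for e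
  proof -
    obtain c n where cn: "opnorm (opsub S (Sop a (trunc (\<lambda>k. c k * bw a k) n))) < e"
      "S \<in> A_T a \<longrightarrow> c 0 = 0" using At_approx[OF S e] by blast
    define p where "p = trunc (\<lambda>k. c k * bw a k) n"
    have pl: "p \<in> l2" by (simp add: p_def trunc_l2)
    have Rb: "is_bop (opsub S (Sop a p))" by (rule opsub_bop[OF Sb Sop_bop[OF pl]])
    have Re0: "opsub S (Sop a p) (basis_vec 0) = vsub x p" by (simp add: opsub_def Sop_e0 x_def)
    have "l2norm (vsub x p) \<le> opnorm (opsub S (Sop a p)) * 1"
      using bop_le[OF Rb basis_l2, of 0] by (simp add: Re0)
    then have 1: "l2norm (vsub x p) < e" using cn by (simp add: p_def)
    have 2: "l2norm (opsub S (Sop a p) y) \<le> e * l2norm y" if "y \<in> l2" for y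
    proof -
      have "l2norm (opsub S (Sop a p) y) \<le> opnorm (opsub S (Sop a p)) * l2norm y" by (rule bop_le[OF Rb that])
      also have "\<dots> \<le> e * l2norm y" using cn l2norm_nonneg[OF that] by (intro mult_right_mono) (auto simp: p_def)
      finally show ?thesis .
    qed
    have 3: "S \<in> A_T a \<longrightarrow> p 0 = 0" using cn by (simp add: p_def trunc_def)
    show ?thesis using pl 1 2 3 by blast
  qed
  have eq: "S y m = Sop a x y m" for y m
  proof (cases "y \<in> l2")
    case False then show ?thesis using Sb by (simp add: is_bop_def Sop_def)
  next
    case True
    have "cmod (S y m - conv a x y m) \<le> e" if e: "e > 0" for e
    proof -
      define e' where "e' = e / ((1 + sqrt (Kc a)) * (l2norm y + 1))"
      have ny: "l2norm y \<ge> 0" using l2norm_nonneg[OF True] .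
      have hp: "(1 + sqrt (Kc a)) * (l2norm y + 1) > 0" using ny Kc_pos by (simp add: add_nonneg_pos add_pos_nonneg)
      have e': "e' > 0" using e hp by (simp add: e'_def)
      obtain p where p: "p \<in> l2" "l2norm (vsub x p) < e'" "\<forall>y\<in>l2. l2norm (opsub S (Sop a p) y) \<le> e' * l2norm y"
        using main[OF e'] by blast
      have Syl: "S y \<in> l2" using Sb True by (simp add: is_bop_def)
      have Rl: "opsub S (Sop a p) y \<in> l2" using Syl conv_bound(1)[OF p(1) True] True by (simp add: opsub_def Sop_def l2_vsub)
      have cv: "conv a (vsub x p) y m = conv a x y m - conv a p y m"
        by (simp only: conv_vsub1) (simp add: vsub_def)
      have d: "S y m - conv a x y m = opsub S (Sop a p) y m - conv a (vsub x p) y m"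
        using True by (simp add: cv[unfolded vsub_def] opsub_def Sop_def vsub_def)
      have "cmod (opsub S (Sop a p) y m) \<le> e' * l2norm y"
        using l2_coord[OF Rl, of m] p(3) True by fastforce
      moreover have "cmod (conv a (vsub x p) y m) \<le> sqrt (Kc a) * e' * l2norm y"
      proof -
        have "cmod (conv a (vsub x p) y m) \<le> l2norm (conv a (vsub x p) y)"
          by (rule l2_coord[OF conv_bound(1)[OF l2_vsub[OF xl p(1)] True]])
        also have "\<dots> \<le> sqrt (Kc a) * l2norm (vsub x p) * l2norm y"
          by (rule conv_bound(2)[OF l2_vsub[OF xl p(1)] True])
        also have "\<dots> \<le> sqrt (Kc a) * e' * l2norm y"
          using p(2) ny Kc_pos by (intro mult_right_mono mult_left_mono) auto
        finally show ?thesis .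
      qed
      ultimately have "cmod (S y m - conv a x y m) \<le> (1 + sqrt (Kc a)) * e' * l2norm y"
        unfolding d using norm_triangle_ineq4[of "opsub S (Sop a p) y m" "conv a (vsub x p) y m"]
        by (simp add: algebra_simps)
      also have "\<dots> \<le> (1 + sqrt (Kc a)) * e' * (l2norm y + 1)"
        using e' Kc_pos by (intro mult_left_mono) auto
      also have "\<dots> = e"
      proof -
        have "sqrt (Kc a) \<ge> 0" using Kc_pos by simp
        then have "1 + sqrt (Kc a) \<noteq> 0" "l2norm y + 1 \<noteq> 0" using ny by linarith+
        then show ?thesis by (simp add: e'_def)
      qed
      finally show ?thesis .
    qed
    then have "S y m - conv a x y m = 0" by (rule small_zero)
    then show ?thesis using True by (simp add: Sop_def)
  qed
  have x0: "x 0 = 0" if A: "S \<in> A_T a"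
  proof (rule small_zero)
    fix e :: real assume e: "e > 0"
    obtain p where p: "p \<in> l2" "l2norm (vsub x p) < e" "p 0 = 0" using main[OF e] A by blast
    have "cmod (vsub x p 0) \<le> l2norm (vsub x p)" by (rule l2_coord[OF l2_vsub[OF xl p(1)]])
    then show "cmod (x 0) \<le> e" using p by (simp add: vsub_def)
  qed
  show ?thesis using eq x0 by (auto simp: x_def[symmetric] fun_eq_iff)
qed

lemma At_eq: "A_T_tilde a = Sop a ` l2"
proof
  show "A_T_tilde a \<subseteq> Sop a ` l2"
  proof
    fix S assume S: "S \<in> A_T_tilde a"
    then have "S = Sop a (S (basis_vec 0))" using At_char by blast
    moreover have "S (basis_vec 0) \<in> l2" using S by (simp add: A_T_tilde_def is_bop_def)
    ultimately show "S \<in> Sop a ` l2" by blast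
  qed
qed (auto intro: Sop_in_At)

lemma A_eq: "A_T a = Sop a ` H1"
proof
  have sub: "A_T a \<subseteq> A_T_tilde a"
  proof
    fix S assume S: "S \<in> A_T a"
    have "\<exists>c n. opnorm (opsub S (polyT a c n)) < e" if "e > 0" for e
    proof -
      obtain c n where "opnorm (opsub S (polyT a c n)) < e" using S \<open>e > 0\<close> by (auto simp: A_T_def)
      then show ?thesis by blast
    qed
    then show "S \<in> A_T_tilde a" using S by (simp add: A_T_def A_T_tilde_def)
  qed
  show "A_T a \<subseteq> Sop a ` H1"
  proof
    fix S assume S: "S \<in> A_T a"
    then have St: "S \<in> A_T_tilde a" using sub by blast
    then have "S = Sop a (S (basis_vec 0))" "S (basis_vec 0) 0 = 0" using At_char S by blast+
    moreover have "S (basis_vec 0) \<in> l2" using St by (simp add: A_T_tilde_def is_bop_def)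
    ultimately show "S \<in> Sop a ` H1" unfolding H1_char by blast
  qed
qed (auto simp: H1_char intro: Sop_in_A)

end

lemma subspace_sum:
  fixes N :: nat and v :: "nat \<Rightarrow> vec"
  assumes "M \<in> closed_inv_subspaces T K" "\<And>k. v k \<in> M"
  shows "(\<lambda>j. \<Sum>k\<le>N. c k * v k j) \<in> M"
proof (induction N)
  case 0
  have "(\<lambda>j. \<Sum>k\<le>0. c k * v k j) = vscale (c 0) (v 0)" by (simp add: vscale_def)
  then show ?case using assms by (simp add: closed_inv_subspaces_def)
next
  case (Suc N)
  have "(\<lambda>j. \<Sum>k\<le>Suc N. c k * v k j) = vadd (\<lambda>j. \<Sum>k\<le>N. c k * v k j) (vscale (c (Suc N)) (v (Suc N)))"
    by (simp add: vadd_def vscale_def)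
  then show ?case using assms Suc by (simp add: closed_inv_subspaces_def)
qed

lemma Mpow: assumes "M \<in> closed_inv_subspaces T K" "s \<in> M" shows "(T ^^ k) s \<in> M"
  using assms by (induction k) (auto simp: closed_inv_subspaces_def)

context ws begin

lemma M_conv:
  assumes M: "M \<in> closed_inv_subspaces (wshift a) K" and K: "K \<subseteq> l2"
    and r: "r \<in> l2" and s: "s \<in> M"
  shows "conv a r s \<in> M"
proof -
  have MK: "M \<subseteq> K" using M by (simp add: closed_inv_subspaces_def)
  have sl: "s \<in> l2" using s MK K by blast
  have tr: "conv a (trunc r N) s \<in> M" for N
  proof -
    have "conv a (trunc r N) s = polyT a (\<lambda>k. r k / bw a k) N s"
      using sl by (simp only: polyT_Sop trunc_eq) (simp add: Sop_def)
    also have "\<dots> = (\<lambda>j. \<Sum>k\<le>N. r k / bw a k * (wshift a ^^ k) s j)"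
      using sl by (simp add: polyT_def)
    finally have eq: "conv a (trunc r N) s = (\<lambda>j. \<Sum>k\<le>N. r k / bw a k * (wshift a ^^ k) s j)" .
    show ?thesis unfolding eq by (rule subspace_sum[OF M]) (rule Mpow[OF M s])
  qed
  have cl: "conv a r s \<in> l2" by (rule conv_bound(1)[OF r sl])
  have "\<forall>x\<in>l2. (\<forall>\<epsilon>>0. \<exists>y\<in>M. l2norm (vsub x y) < \<epsilon>) \<longrightarrow> x \<in> M"
    using M by (simp add: closed_inv_subspaces_def)
  moreover have "\<exists>y\<in>M. l2norm (vsub (conv a r s) y) < e" if e: "e > 0" for e
  proof -
    define d where "d = sqrt (Kc a) * l2norm s + 1"
    have d: "d > 0" using Kc_pos l2norm_nonneg[OF sl] by (simp add: d_def add_nonneg_pos)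
    obtain N where N: "l2norm (vsub r (trunc r N)) < e / d"
      using tail_small[OF r, of "e/d"] e d by auto
    have "vsub (conv a r s) (conv a (trunc r N) s) = conv a (vsub r (trunc r N)) s"
      by (simp add: conv_vsub1)
    then have "l2norm (vsub (conv a r s) (conv a (trunc r N) s)) \<le> sqrt (Kc a) * l2norm (vsub r (trunc r N)) * l2norm s"
      using conv_bound(2)[OF l2_vsub[OF r trunc_l2] sl] by simp
    also have "\<dots> = l2norm (vsub r (trunc r N)) * (sqrt (Kc a) * l2norm s)" by simp
    also have "\<dots> \<le> l2norm (vsub r (trunc r N)) * d"
      using l2norm_nonneg[OF l2_vsub[OF r trunc_l2]] by (intro mult_left_mono) (auto simp: d_def)
    also have "\<dots> < e / d * d" using N d by (intro mult_strict_right_mono) auto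
    also have "\<dots> = e" using d by simp
    finally show ?thesis using tr by blast
  qed
  ultimately show ?thesis using cl by blast
qed

lemma main_part:
  assumes Kl2: "K \<subseteq> l2" and Kz: "zvec \<in> K"
    and Kadd: "\<And>x y. x \<in> K \<Longrightarrow> y \<in> K \<Longrightarrow> vadd x y \<in> K"
    and Kscale: "\<And>c x. x \<in> K \<Longrightarrow> vscale c x \<in> K"
    and Kcl: "\<And>x. x \<in> l2 \<Longrightarrow> (\<forall>\<epsilon>>0. \<exists>y\<in>K. l2norm (vsub x y) < \<epsilon>) \<Longrightarrow> x \<in> K"
    and Kconv: "\<And>x y. x \<in> K \<Longrightarrow> y \<in> K \<Longrightarrow> conv a x y \<in> K"
    and KT: "Ev a (Suc 0) \<in> K"
    and A: "A = Sop a ` K"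
  shows "linear_homeo (\<lambda>S. S (basis_vec 0)) A K \<and>
         lattice_iso (\<lambda>J. (\<lambda>S. S (basis_vec 0)) ` J) (closed_ideals A) (closed_inv_subspaces (wshift a) K)"
proof -
  let ?F = "\<lambda>S. S (basis_vec 0)"
  have FS: "?F (Sop a x) = x" for x by (simp add: Sop_e0)
  have Arep: "S = Sop a (?F S) \<and> ?F S \<in> K" if "S \<in> A" for S using that A FS by auto
  have SopA: "Sop a x \<in> A" if "x \<in> K" for x using that A by auto
  have inj: "inj_on ?F A" by (rule inj_onI) (metis Arep)
  have FA: "?F ` A = K" using A FS by (auto simp: image_iff)
  have hp: "sqrt (Kc a) + 1 > 0" using Kc_pos by (simp add: add_nonneg_pos)
  have subnorm: "opnorm (opsub R S) = opnorm (Sop a (vsub (?F R) (?F S)))" if "R \<in> A" "S \<in> A" for R S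
    using Arep[OF that(1)] Arep[OF that(2)] Sop_sub by metis
  have low: "l2norm (vsub (?F R) (?F S)) \<le> opnorm (opsub R S)" if "R \<in> A" "S \<in> A" for R S
    using subnorm[OF that] Sop_norm_ge[OF l2_vsub] Arep that Kl2 by (metis subsetD)
  have up: "opnorm (opsub R S) \<le> sqrt (Kc a) * l2norm (vsub (?F R) (?F S))" if "R \<in> A" "S \<in> A" for R S
    using subnorm[OF that] Sop_opnorm[OF l2_vsub] Arep that Kl2 by (metis subsetD)
  have LH: "linear_homeo ?F A K"
    unfolding linear_homeo_def
  proof (intro conjI ballI allI impI)
    show "bij_betw ?F A K" using inj FA by (simp add: bij_betw_def)
  next
    fix S e assume S: "S \<in> A" and e: "(e::real) > 0"
    show "\<exists>\<delta>>0. \<forall>R\<in>A. opnorm (opsub R S) < \<delta> \<longrightarrow> l2norm (vsub (?F R) (?F S)) < e"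
      using low S e by (meson order.strict_trans1)
  next
    fix S e assume S: "S \<in> A" and e: "(e::real) > 0"
    show "\<exists>\<delta>>0. \<forall>R\<in>A. l2norm (vsub (?F R) (?F S)) < \<delta> \<longrightarrow> opnorm (opsub R S) < e"
    proof (intro exI[of _ "e / (sqrt (Kc a) + 1)"] conjI ballI impI)
      show "e / (sqrt (Kc a) + 1) > 0" using e hp by simp
      fix R assume R: "R \<in> A" and lt: "l2norm (vsub (?F R) (?F S)) < e / (sqrt (Kc a) + 1)"
      have "opnorm (opsub R S) \<le> sqrt (Kc a) * l2norm (vsub (?F R) (?F S))" by (rule up[OF R S])
      also have "\<dots> \<le> (sqrt (Kc a) + 1) * l2norm (vsub (?F R) (?F S))"
        using l2norm_nonneg[OF l2_vsub] Arep[OF R] Arep[OF S] Kl2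
        by (intro mult_right_mono) (auto simp: subset_iff)
      also have "\<dots> < (sqrt (Kc a) + 1) * (e / (sqrt (Kc a) + 1))"
        using lt hp by (intro mult_strict_left_mono) auto
      also have "\<dots> = e" using hp by simp
      finally show "opnorm (opsub R S) < e" .
    qed
  qed (simp_all add: opadd_def opscale_def)
  have I2M: "?F ` J \<in> closed_inv_subspaces (wshift a) K" if J: "J \<in> closed_ideals A" for J
  proof -
    have JA: "J \<subseteq> A" using J by (simp add: closed_ideals_def)
    have Jz: "zop \<in> J" using J by (simp add: closed_ideals_def)
    have Jadd: "\<And>S R. S \<in> J \<Longrightarrow> R \<in> J \<Longrightarrow> opadd S R \<in> J" using J by (simp add: closed_ideals_def)
    have Jsc: "\<And>c S. S \<in> J \<Longrightarrow> opscale c S \<in> J" using J by (simp add: closed_ideals_def)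
    have Jmul: "\<And>S R. S \<in> J \<Longrightarrow> R \<in> A \<Longrightarrow> R \<circ> S \<in> J" using J by (simp add: closed_ideals_def)
    have Jcl: "\<And>S. S \<in> A \<Longrightarrow> (\<forall>\<epsilon>>0. \<exists>R\<in>J. opnorm (opsub S R) < \<epsilon>) \<Longrightarrow> S \<in> J"
      using J by (simp add: closed_ideals_def)
    have TA: "wshift a \<in> A" using SopA[OF KT] wshift_Sop by simp
    have f1: "?F ` J \<subseteq> K" using JA FA by blast
    have f2: "zvec \<in> ?F ` J"
      by (rule image_eqI[rotated, OF Jz]) (simp add: zop_def)
    have f3: "vadd x y \<in> ?F ` J" if hx: "x \<in> ?F ` J" and hy: "y \<in> ?F ` J" for x y
    proof -
      obtain S where S: "S \<in> J" "x = ?F S" using hx by blast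
      obtain R where R: "R \<in> J" "y = ?F R" using hy by blast
      show ?thesis by (rule image_eqI[rotated, OF Jadd[OF S(1) R(1)]]) (simp add: opadd_def S R)
    qed
    have f4: "vscale c x \<in> ?F ` J" if hx: "x \<in> ?F ` J" for x c
    proof -
      obtain S where S: "S \<in> J" "x = ?F S" using hx by blast
      show ?thesis by (rule image_eqI[rotated, OF Jsc[OF S(1)]]) (simp add: opscale_def S)
    qed
    have f5: "wshift a x \<in> ?F ` J" if hx: "x \<in> ?F ` J" for x
    proof -
      obtain S where S: "S \<in> J" "x = ?F S" using hx by blast
      show ?thesis by (rule image_eqI[rotated, OF Jmul[OF S(1) TA]]) (simp add: S)
    qed
    have f6: "x \<in> ?F ` J" if x: "x \<in> l2" and ap: "\<forall>\<epsilon>>0. \<exists>y\<in>?F ` J. l2norm (vsub x y) < \<epsilon>" for x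
    proof -
      have "\<forall>\<epsilon>>0. \<exists>y\<in>K. l2norm (vsub x y) < \<epsilon>"
      proof (intro allI impI)
        fix e :: real assume "e > 0"
        then obtain y where "y \<in> ?F ` J" "l2norm (vsub x y) < e" using ap by blast
        then show "\<exists>y\<in>K. l2norm (vsub x y) < e" using f1 by blast
      qed
      then have xK: "x \<in> K" by (rule Kcl[OF x])
      have "\<forall>e>0. \<exists>R\<in>J. opnorm (opsub (Sop a x) R) < e"
      proof (intro allI impI)
        fix e :: real assume e: "e > 0"
        have e2: "e / (sqrt (Kc a) + 1) > 0" using e hp by simp
        obtain y where y: "y \<in> ?F ` J" "l2norm (vsub x y) < e / (sqrt (Kc a) + 1)"
          using ap e2 by blast
        obtain R where R: "R \<in> J" "y = ?F R" using y(1) by blast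
        have RA: "R \<in> A" using R JA by blast
        have yl: "y \<in> l2" using Arep[OF RA] Kl2 R by auto
        have "opnorm (opsub (Sop a x) R) \<le> sqrt (Kc a) * l2norm (vsub x y)"
          using up[OF SopA[OF xK] RA] by (simp add: FS R)
        also have "\<dots> \<le> (sqrt (Kc a) + 1) * l2norm (vsub x y)"
          using l2norm_nonneg[OF l2_vsub[OF x yl]] by (intro mult_right_mono) auto
        also have "\<dots> < (sqrt (Kc a) + 1) * (e / (sqrt (Kc a) + 1))"
          using y(2) hp by (intro mult_strict_left_mono) auto
        also have "\<dots> = e" using hp by simp
        finally show "\<exists>R\<in>J. opnorm (opsub (Sop a x) R) < e" using R(1) by blast
      qed
      then have "Sop a x \<in> J" by (rule Jcl[OF SopA[OF xK]])
      then show ?thesis by (rule image_eqI[rotated]) (simp add: FS)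
    qed
    show ?thesis unfolding closed_inv_subspaces_def mem_Collect_eq
    proof (intro conjI ballI allI impI)
      show "?F ` J \<subseteq> K" by (rule f1)
      show "zvec \<in> ?F ` J" by (rule f2)
    qed (auto intro: f3 f4 f5 f6)
  qed
  have M2I: "{S \<in> A. ?F S \<in> M} \<in> closed_ideals A \<and> ?F ` {S \<in> A. ?F S \<in> M} = M"
    if M: "M \<in> closed_inv_subspaces (wshift a) K" for M
  proof -
    let ?J = "{S \<in> A. ?F S \<in> M}"
    have MK: "M \<subseteq> K" using M by (simp add: closed_inv_subspaces_def)
    have Msub: "zvec \<in> M" "\<And>x y. x \<in> M \<Longrightarrow> y \<in> M \<Longrightarrow> vadd x y \<in> M" "\<And>c x. x \<in> M \<Longrightarrow> vscale c x \<in> M"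
      "\<And>x. x \<in> l2 \<Longrightarrow> (\<forall>\<epsilon>>0. \<exists>y\<in>M. l2norm (vsub x y) < \<epsilon>) \<Longrightarrow> x \<in> M"
      using M by (auto simp: closed_inv_subspaces_def)
    have img: "?F ` ?J = M"
    proof
      show "M \<subseteq> ?F ` ?J"
      proof
        fix x assume x: "x \<in> M"
        then have "Sop a x \<in> ?J" using MK SopA FS by auto
        then show "x \<in> ?F ` ?J" by (rule image_eqI[rotated]) (simp add: FS)
      qed
    qed auto
    have "?J \<in> closed_ideals A"
      unfolding closed_ideals_def
    proof (rule CollectI, intro conjI ballI allI impI)
      show "?J \<subseteq> A" by blast
      show "zop \<in> ?J" using SopA[OF Kz] Sop_zvec Msub(1) by (simp add: zop_def)
    next
      fix S R assume S: "S \<in> ?J" and R: "R \<in> ?J"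
      have SA: "S \<in> A" "?F S \<in> M" and RA: "R \<in> A" "?F R \<in> M" using S R by auto
      obtain s where s: "S = Sop a s" "s \<in> K" using Arep[OF SA(1)] by blast
      obtain r where r: "R = Sop a r" "r \<in> K" using Arep[OF RA(1)] by blast
      have sM: "s \<in> M" "r \<in> M" using SA(2) RA(2) s r by (simp_all add: FS)
      have e1: "opadd S R = Sop a (vadd s r)" using Sop_add s r by simp
      have "vadd s r \<in> K" using Kadd s r by blast
      moreover have "vadd s r \<in> M" using Msub(2)[OF sM] .
      ultimately show "opadd S R \<in> ?J" unfolding e1 using SopA FS by simp
    next
      fix c S assume S: "S \<in> ?J"
      have SA: "S \<in> A" "?F S \<in> M" using S by auto
      obtain s where s: "S = Sop a s" "s \<in> K" using Arep[OF SA(1)] by blast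
      have sM: "s \<in> M" using SA(2) s by (simp add: FS)
      have e1: "opscale c S = Sop a (vscale c s)" using Sop_scale s by simp
      have "vscale c s \<in> K" using Kscale s by blast
      moreover have "vscale c s \<in> M" using Msub(3)[OF sM] .
      ultimately show "opscale c S \<in> ?J" unfolding e1 using SopA FS by simp
    next
      fix S R assume S: "S \<in> ?J" and R: "R \<in> A"
      have SA: "S \<in> A" "?F S \<in> M" using S by auto
      obtain s where s0: "S = Sop a s" "s \<in> K" using Arep[OF SA(1)] by blast
      have s: "S = Sop a s" "s \<in> K" "s \<in> M" using s0 SA(2) by (simp_all add: FS)
      obtain r where r: "R = Sop a r" "r \<in> K" using Arep[OF R] by blast
      have sl: "s \<in> l2" "r \<in> l2" using s r Kl2 by auto
      have RS: "R \<circ> S = Sop a (conv a r s)" using Sop_comp[OF sl(2,1)] s r by simp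
      have SR: "S \<circ> R = Sop a (conv a r s)" using Sop_comp[OF sl(1,2)] s r conv_comm by simp
      have inM: "conv a r s \<in> M" by (rule M_conv[OF M Kl2 sl(2) s(3)])
      have inK: "conv a r s \<in> K" using Kconv r s by blast
      show "R \<circ> S \<in> ?J" using RS inM inK SopA FS by simp
      show "S \<circ> R \<in> ?J" using SR inM inK SopA FS by simp
    next
      fix S assume S: "S \<in> A" and ap: "\<forall>\<epsilon>>0. \<exists>R\<in>?J. opnorm (opsub S R) < \<epsilon>"
      have "?F S \<in> M"
      proof (rule Msub(4))
        show "?F S \<in> l2" using conjunct2[OF Arep[OF S]] Kl2 by blast
        show "\<forall>\<epsilon>>0. \<exists>y\<in>M. l2norm (vsub (?F S) y) < \<epsilon>"
        proof (intro allI impI)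
          fix e :: real assume e: "e > 0"
          obtain R where R: "R \<in> ?J" "opnorm (opsub S R) < e" using ap e by blast
          have RA: "R \<in> A" using R(1) by simp
          have "l2norm (vsub (?F S) (?F R)) < e" using low[OF S RA] R(2) by linarith
          then show "\<exists>y\<in>M. l2norm (vsub (?F S) y) < e" using R by blast
        qed
      qed
      then show "S \<in> ?J" using S by blast
    qed
    then show ?thesis using img by blast
  qed
  have LI: "lattice_iso (\<lambda>J. ?F ` J) (closed_ideals A) (closed_inv_subspaces (wshift a) K)"
    unfolding lattice_iso_def bij_betw_def
  proof (intro conjI ballI)
    have sub: "J \<subseteq> A" if "J \<in> closed_ideals A" for J using that by (simp add: closed_ideals_def)
    show "inj_on (\<lambda>J. ?F ` J) (closed_ideals A)"
    proof (rule inj_onI)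
      fix J1 J2 assume "J1 \<in> closed_ideals A" "J2 \<in> closed_ideals A" "?F ` J1 = ?F ` J2"
      then show "J1 = J2" using inj_on_image_eq_iff[OF inj sub sub] by blast
    qed
    show "(\<lambda>J. ?F ` J) ` closed_ideals A = closed_inv_subspaces (wshift a) K"
    proof
      show "(\<lambda>J. ?F ` J) ` closed_ideals A \<subseteq> closed_inv_subspaces (wshift a) K" using I2M by blast
      show "closed_inv_subspaces (wshift a) K \<subseteq> (\<lambda>J. ?F ` J) ` closed_ideals A"
      proof
        fix M assume M: "M \<in> closed_inv_subspaces (wshift a) K"
        show "M \<in> (\<lambda>J. ?F ` J) ` closed_ideals A"
          by (rule image_eqI[where x="{S \<in> A. ?F S \<in> M}"]) (use M2I[OF M] in auto)
      qed
    qed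
    fix J1 J2 assume J1: "J1 \<in> closed_ideals A" and J2: "J2 \<in> closed_ideals A"
    show "J1 \<subseteq> J2 \<longleftrightarrow> ?F ` J1 \<subseteq> ?F ` J2"
    proof
      assume "?F ` J1 \<subseteq> ?F ` J2"
      then show "J1 \<subseteq> J2" using inj_on_image_mem_iff[OF inj _ sub[OF J2]] sub[OF J1] by blast
    qed blast
  qed
  show ?thesis using LH LI by blast
qed

end

theorem mainTheorem11:
  fixes a :: "nat \<Rightarrow> complex"
  assumes nz: "\<And>n. a n \<noteq> 0"
    and decr: "\<And>n. cmod (a (Suc n)) \<le> cmod (a n)"
    and sq: "summable (\<lambda>n. (cmod (a n))\<^sup>2)"
  shows "(linear_homeo (\<lambda>S. S (basis_vec 0)) (A_T a) H1 \<and>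
         lattice_iso (\<lambda>J. (\<lambda>S. S (basis_vec 0)) ` J)
            (closed_ideals (A_T a)) (closed_inv_subspaces (wshift a) H1)) \<and>
         (linear_homeo (\<lambda>S. S (basis_vec 0)) (A_T_tilde a) l2 \<and>
         lattice_iso (\<lambda>J. (\<lambda>S. S (basis_vec 0)) ` J)
            (closed_ideals (A_T_tilde a)) (closed_inv_subspaces (wshift a) l2))"
proof -
  interpret ws a using nz decr sq by unfold_locales
  have part1: "linear_homeo (\<lambda>S. S (basis_vec 0)) (A_T a) H1 \<and>
         lattice_iso (\<lambda>J. (\<lambda>S. S (basis_vec 0)) ` J)
            (closed_ideals (A_T a)) (closed_inv_subspaces (wshift a) H1)"
  proof (rule main_part)
    show "H1 \<subseteq> l2" by (auto simp: H1_char)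
    show "zvec \<in> H1" by (simp add: H1_char) (simp add: zvec_def)
    show "vadd x y \<in> H1" if "x \<in> H1" "y \<in> H1" for x y
      using that by (auto simp: H1_char l2_vadd) (simp add: vadd_def)
    show "vscale c x \<in> H1" if "x \<in> H1" for c x
      using that by (auto simp: H1_char l2_vscale) (simp add: vscale_def)
    show "x \<in> H1" if x: "x \<in> l2" and ap: "\<forall>\<epsilon>>0. \<exists>y\<in>H1. l2norm (vsub x y) < \<epsilon>" for x
    proof -
      have "x 0 = 0"
      proof (rule small_zero)
        fix e :: real assume "e > 0"
        then obtain y where y: "y \<in> H1" "l2norm (vsub x y) < e" using ap by blast
        have yl: "y \<in> l2" "y 0 = 0" using y(1) by (auto simp: H1_char)
        have "cmod (vsub x y 0) \<le> l2norm (vsub x y)" by (rule l2_coord[OF l2_vsub[OF x yl(1)]])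
        then show "cmod (x 0) \<le> e" using y(2) yl(2) by (simp add: vsub_def)
      qed
      then show ?thesis using x by (simp add: H1_char)
    qed
    show "conv a x y \<in> H1" if "x \<in> H1" "y \<in> H1" for x y
      using that conv_bound(1) by (auto simp: H1_char) (simp add: conv_def)
    show "Ev a (Suc 0) \<in> H1" by (simp add: H1_char Ev_l2) (simp add: Ev_def single_def)
    show "A_T a = Sop a ` H1" by (rule A_eq)
  qed
  have part2: "linear_homeo (\<lambda>S. S (basis_vec 0)) (A_T_tilde a) l2 \<and>
         lattice_iso (\<lambda>J. (\<lambda>S. S (basis_vec 0)) ` J)
            (closed_ideals (A_T_tilde a)) (closed_inv_subspaces (wshift a) l2)"
  proof (rule main_part)
    show "A_T_tilde a = Sop a ` l2" by (rule At_eq)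
  qed (auto simp: l2_vadd l2_vscale conv_bound(1) Ev_l2)
  show ?thesis using part1 part2 by blast
qed


end
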